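(* Let $A$ be a two-dimensional evolution algebra over a field $\mathbb{K}$ with $\dim(A^2)=1$, $A^3\neq0$ and $(A^2)^2=0$. Then there is a natural basis $\{e,f\}$ of $A$ with $e^2=e-f$ and $f^2=-e+f$. The square of $A$ is $\mathfrak{D}_5$, and $A$ is not alternative.
   Context: An evolution algebra over $\mathbb{K}$ is a $\mathbb{K}$-algebra with a basis $\{e_i\}$ (natural basis) such that $e_ie_j=0$ for $i\neq j$. $A^2$ is the span of $\{xy: x,y\in A\}$, $A^3$ the span of $\{xy: x\in A,y\in A^2\}$, $(A^2)^2$ the span of $\{xy:x,y\in A^2\}$. For a natural basis $\{e_1,e_2\}$ with $e_1^2=\omega_{11}e_1+\omega_{21}e_2$, $e_2^2=\omega_{12}e_1+\omega_{22}e_2$, its pseudo-square is $\{L,T,R,D\}$-subset with $L,T,R,D$ present iff $\omega_{11},\omega_{12},\omega_{22},\omega_{21}$ respectively are nonzero; the square of $A$ is the set of pseudo-squares of all natural bases; $\mathfrak{D}_5=\{\{L,T,R,D\}\}$. $A$ is alternative if $x^2y=x(xy)$ and $yx^2=(yx)x$ for all $x,y\in A$. *)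

theory Defs
  imports Complex_Main
begin

definition bilinear_mult :: "('k::field \<Rightarrow> 'a::ab_group_add \<Rightarrow> 'a) \<Rightarrow> ('a \<Rightarrow> 'a \<Rightarrow> 'a) \<Rightarrow> bool" where
  "bilinear_mult sc mult \<longleftrightarrow>
     (\<forall>x y z. mult (x + y) z = mult x z + mult y z) \<and>
     (\<forall>x y z. mult x (y + z) = mult x y + mult x z) \<and>
     (\<forall>c x y. mult (sc c x) y = sc c (mult x y)) \<and>
     (\<forall>c x y. mult x (sc c y) = sc c (mult x y))"

definition natural_basis2 :: "('k::field \<Rightarrow> 'a::ab_group_add \<Rightarrow> 'a) \<Rightarrow> ('a \<Rightarrow> 'a \<Rightarrow> 'a) \<Rightarrow> 'a \<Rightarrow> 'a \<Rightarrow> bool" where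
  "natural_basis2 sc mult e f \<longleftrightarrow>
     e \<noteq> f \<and> \<not> module.dependent sc {e, f} \<and> module.span sc {e, f} = UNIV \<and>
     mult e f = 0 \<and> mult f e = 0"

definition evolution_algebra2 :: "('k::field \<Rightarrow> 'a::ab_group_add \<Rightarrow> 'a) \<Rightarrow> ('a \<Rightarrow> 'a \<Rightarrow> 'a) \<Rightarrow> bool" where
  "evolution_algebra2 sc mult \<longleftrightarrow>
     vector_space sc \<and> bilinear_mult sc mult \<and> vector_space.dim sc (UNIV :: 'a set) = 2 \<and>
     (\<exists>e f. natural_basis2 sc mult e f)"

definition alg_sq :: "('k::field \<Rightarrow> 'a::ab_group_add \<Rightarrow> 'a) \<Rightarrow> ('a \<Rightarrow> 'a \<Rightarrow> 'a) \<Rightarrow> 'a set" where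
  "alg_sq sc mult = module.span sc {mult x y | x y. True}"

definition alg_cube :: "('k::field \<Rightarrow> 'a::ab_group_add \<Rightarrow> 'a) \<Rightarrow> ('a \<Rightarrow> 'a \<Rightarrow> 'a) \<Rightarrow> 'a set" where
  "alg_cube sc mult = module.span sc {mult x y | x y. y \<in> alg_sq sc mult}"

definition alg_sq_sq :: "('k::field \<Rightarrow> 'a::ab_group_add \<Rightarrow> 'a) \<Rightarrow> ('a \<Rightarrow> 'a \<Rightarrow> 'a) \<Rightarrow> 'a set" where
  "alg_sq_sq sc mult = module.span sc {mult x y | x y. x \<in> alg_sq sc mult \<and> y \<in> alg_sq sc mult}"

datatype letter = L | T | R | D

text \<open>Pseudo-square of the natural basis (e1,e2) = (e,f):
  e^2 = w11 e + w21 f, f^2 = w12 e + w22 f;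
  L iff w11 \<noteq> 0, T iff w12 \<noteq> 0, R iff w22 \<noteq> 0, D iff w21 \<noteq> 0.\<close>

definition pseudo_square :: "('k::field \<Rightarrow> 'a::ab_group_add \<Rightarrow> 'a) \<Rightarrow> ('a \<Rightarrow> 'a \<Rightarrow> 'a) \<Rightarrow> 'a \<Rightarrow> 'a \<Rightarrow> letter set" where
  "pseudo_square sc mult e f =
     {s. case s of
          L \<Rightarrow> module.representation sc {e, f} (mult e e) e \<noteq> 0
        | T \<Rightarrow> module.representation sc {e, f} (mult f f) e \<noteq> 0
        | R \<Rightarrow> module.representation sc {e, f} (mult f f) f \<noteq> 0
        | D \<Rightarrow> module.representation sc {e, f} (mult e e) f \<noteq> 0}"

definition square_of :: "('k::field \<Rightarrow> 'a::ab_group_add \<Rightarrow> 'a) \<Rightarrow> ('a \<Rightarrow> 'a \<Rightarrow> 'a) \<Rightarrow> letter set set" where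
  "square_of sc mult = {pseudo_square sc mult e f | e f. natural_basis2 sc mult e f}"

definition frakD5 :: "letter set set" where
  "frakD5 = {{L, T, R, D}}"

definition alternative_alg :: "('a \<Rightarrow> 'a \<Rightarrow> 'a) \<Rightarrow> bool" where
  "alternative_alg mult \<longleftrightarrow>
     (\<forall>x y. mult (mult x x) y = mult x (mult x y) \<and> mult y (mult x x) = mult (mult y x) x)"

end

theory Submission
  imports Defs
begin

lemma fieldpart:
  fixes a b c d :: "'k::field"
  assumes A1: "a^3 + b^2*c = 0" and A2: "a^2*b + b^2*d = 0"
    and B1: "c^2*a + d^2*c = 0" and B2: "c^2*b + d^3 = 0"
    and C: "\<not> ((a = 0 \<or> (a = 0 \<and> b = 0)) \<and> (b = 0 \<or> (c = 0 \<and> d = 0))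
               \<and> (c = 0 \<or> (a = 0 \<and> b = 0)) \<and> (d = 0 \<or> (c = 0 \<and> d = 0)))"
  shows "a \<noteq> 0 \<and> b \<noteq> 0 \<and> c \<noteq> 0 \<and> d \<noteq> 0"
proof -
  have a: "a \<noteq> 0"
  proof
    assume a0: "a = 0"
    then have "b = 0 \<or> c = 0" using A1 by simp
    then have "d = 0" using B2 by auto
    then show False using C a0 \<open>b = 0 \<or> c = 0\<close> by auto
  qed
  have d: "d \<noteq> 0"
  proof
    assume d0: "d = 0"
    then have "b = 0 \<or> c = 0" using B2 by (simp, blast)
    then have "a = 0" using A1 by auto
    then show False using a by auto
  qed
  have b: "b \<noteq> 0" using A1 a by auto
  have c: "c \<noteq> 0" using B2 d by auto
  show ?thesis using a b c d by auto
qed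


locale nb2 = vector_space sc for sc :: "'k::field \<Rightarrow> 'a::ab_group_add \<Rightarrow> 'a" +
  fixes mult :: "'a \<Rightarrow> 'a \<Rightarrow> 'a" and e f :: 'a
  assumes bil: "bilinear_mult sc mult" and nb: "natural_basis2 sc mult e f"
begin

lemma ne: "e \<noteq> f" and indep: "independent {e, f}" and spanU: "span {e, f} = UNIV"
  and ef: "mult e f = 0" and fe: "mult f e = 0"
  using nb unfolding natural_basis2_def by auto

lemma madd1: "mult (x + y) z = mult x z + mult y z"
  and madd2: "mult x (y + z) = mult x y + mult x z"
  and msc1: "mult (sc c x) y = sc c (mult x y)"
  and msc2: "mult x (sc c y) = sc c (mult x y)"
  using bil unfolding bilinear_mult_def by auto

lemma m0: "mult 0 y = 0" "mult x 0 = 0"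
  using msc1[of 0 0 y] msc2[of x 0 0] by simp_all

lemma coords: "\<exists>p q. x = sc p e + sc q f"
proof -
  have "x \<in> span {e, f}" using spanU by simp
  then obtain u where "x = (\<Sum>v\<in>{e,f}. sc (u v) v)" using span_finite[of "{e,f}"] by auto
  then show ?thesis using ne by auto
qed

lemma uniq0: "sc p e + sc q f = 0 \<Longrightarrow> p = 0 \<and> q = 0"
proof (rule ccontr)
  assume h: "sc p e + sc q f = 0" "\<not> (p = 0 \<and> q = 0)"
  let ?u = "\<lambda>v. if v = e then p else q"
  have "\<exists>v\<in>{e,f}. ?u v \<noteq> 0" using h(2) ne by auto
  moreover have "(\<Sum>v\<in>{e,f}. sc (?u v) v) = 0" using h(1) ne by auto
  ultimately have "dependent {e,f}" 
    by (intro dependent_finite[of "{e,f}", THEN iffD2] exI[of _ ?u]) auto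
  then show False using indep by simp
qed

lemma eq_iff: "sc p e + sc q f = sc p' e + sc q' f \<longleftrightarrow> p = p' \<and> q = q'"
proof
  assume "sc p e + sc q f = sc p' e + sc q' f"
  then have "sc (p - p') e + sc (q - q') f = 0"
    by (simp add: scale_left_diff_distrib algebra_simps)
  then have "p - p' = 0 \<and> q - q' = 0" by (rule uniq0)
  then show "p = p' \<and> q = q'" by simp
qed auto

lemma zero_iff: "sc p e + sc q f = 0 \<longleftrightarrow> p = 0 \<and> q = 0"
  using uniq0 by auto

lemma mult_coords: "mult (sc p e + sc q f) (sc r e + sc s f) = sc (p*r) (mult e e) + sc (q*s) (mult f f)"
  by (simp add: madd1 madd2 msc1 msc2 ef fe mult.commute)

lemma lin: "sc x (sc a e + sc b f) + sc y (sc c e + sc d f) = sc (x*a + y*c) e + sc (x*b + y*d) f"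
  by (simp add: algebra_simps)

lemma rep: "representation {e, f} (sc p e + sc q f) e = p"
  "representation {e, f} (sc p e + sc q f) f = q"
proof -
  have s: "v \<in> span {e,f}" for v using spanU by simp
  have "representation {e, f} (sc p e + sc q f) = (\<lambda>b. p * representation {e,f} e b + q * representation {e,f} f b)"
    by (simp add: representation_add[OF indep s s] representation_scale[OF indep s])
  then show "representation {e, f} (sc p e + sc q f) e = p"
    "representation {e, f} (sc p e + sc q f) f = q"
    using representation_basis[OF indep, of e] representation_basis[OF indep, of f] ne by auto
qed

lemma sq_in: "mult x y \<in> alg_sq sc mult"
  unfolding alg_sq_def by (rule span_base) blast

lemma sqsq0: "alg_sq_sq sc mult = {0} \<Longrightarrow> x \<in> alg_sq sc mult \<Longrightarrow> y \<in> alg_sq sc mult \<Longrightarrow> mult x y = 0"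
proof -
  assume h: "alg_sq_sq sc mult = {0}" "x \<in> alg_sq sc mult" "y \<in> alg_sq sc mult"
  have "mult x y \<in> alg_sq_sq sc mult" unfolding alg_sq_sq_def by (rule span_base) (use h in blast)
  then show ?thesis using h by simp
qed

lemma cube_nz:
  assumes "alg_cube sc mult \<noteq> {0}"
  shows "\<exists>z. mult z (mult e e) \<noteq> 0 \<or> mult z (mult f f) \<noteq> 0"
proof (rule ccontr)
  assume "\<not> ?thesis"
  then have h: "\<And>z. mult z (mult e e) = 0" "\<And>z. mult z (mult f f) = 0" by auto
  let ?S = "{y. \<forall>z. mult z y = 0}"
  have sub: "subspace ?S" unfolding subspace_def by (auto simp: m0 madd2 msc2)
  have gen: "{mult x y | x y. True} \<subseteq> ?S"
  proof clarify
    fix x y z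
    obtain p q where x: "x = sc p e + sc q f" using coords by blast
    obtain r s where y: "y = sc r e + sc s f" using coords by blast
    show "mult z (mult x y) = 0" unfolding x y mult_coords by (simp add: madd2 msc2 h)
  qed
  have sq: "alg_sq sc mult \<subseteq> ?S" unfolding alg_sq_def using span_minimal[OF gen sub] .
  have "{mult x y | x y. y \<in> alg_sq sc mult} \<subseteq> {0}" using sq by auto
  moreover have "subspace {0}" unfolding subspace_def by simp
  ultimately have "alg_cube sc mult \<subseteq> {0}" unfolding alg_cube_def by (rule span_minimal)
  moreover have "0 \<in> alg_cube sc mult" unfolding alg_cube_def by (rule span_zero)
  ultimately show False using assms by blast
qed

lemma main:
  assumes cube: "alg_cube sc mult \<noteq> {0}" and sqsq: "alg_sq_sq sc mult = {0}"
    and ee: "mult e e = sc a e + sc b f" and ff: "mult f f = sc c e + sc d f"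
  shows "a \<noteq> 0 \<and> b \<noteq> 0 \<and> c \<noteq> 0 \<and> d \<noteq> 0 \<and> a^3 + b^2*c = 0 \<and> a^2*b + b^2*d = 0"
proof -
  have "mult (mult e e) (mult e e) = 0" by (rule sqsq0[OF sqsq sq_in sq_in])
  also have "mult (mult e e) (mult e e) = sc (a*a) (sc a e + sc b f) + sc (b*b) (sc c e + sc d f)"
    unfolding ee mult_coords unfolding ee ff ..
  also have "\<dots> = sc (a*a*a + b*b*c) e + sc (a*a*b + b*b*d) f" by (rule lin)
  finally have A: "a*a*a + b*b*c = 0" "a*a*b + b*b*d = 0" using zero_iff by blast+
  have "mult (mult f f) (mult f f) = 0" by (rule sqsq0[OF sqsq sq_in sq_in])
  also have "mult (mult f f) (mult f f) = sc (c*c) (sc a e + sc b f) + sc (d*d) (sc c e + sc d f)"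
    unfolding ff mult_coords unfolding ee ff ..
  also have "\<dots> = sc (c*c*a + d*d*c) e + sc (c*c*b + d*d*d) f" by (rule lin)
  finally have B: "c*c*a + d*d*c = 0" "c*c*b + d*d*d = 0" using zero_iff by blast+
  obtain z where z: "mult z (mult e e) \<noteq> 0 \<or> mult z (mult f f) \<noteq> 0" using cube_nz[OF cube] by blast
  obtain r s where zc: "z = sc r e + sc s f" using coords by blast
  have Z1: "mult z (mult e e) = sc (r*a) (mult e e) + sc (s*b) (mult f f)"
  proof -
    have "mult z (mult e e) = mult (sc r e + sc s f) (sc a e + sc b f)" using zc ee by simp
    also have "\<dots> = sc (r*a) (mult e e) + sc (s*b) (mult f f)" by (rule mult_coords)
    finally show ?thesis .
  qed
  have Z2: "mult z (mult f f) = sc (r*c) (mult e e) + sc (s*d) (mult f f)"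
  proof -
    have "mult z (mult f f) = mult (sc r e + sc s f) (sc c e + sc d f)" using zc ff by simp
    also have "\<dots> = sc (r*c) (mult e e) + sc (s*d) (mult f f)" by (rule mult_coords)
    finally show ?thesis .
  qed
  have E0: "mult e e = 0 \<longleftrightarrow> a = 0 \<and> b = 0" using ee zero_iff by simp
  have F0: "mult f f = 0 \<longleftrightarrow> c = 0 \<and> d = 0" using ff zero_iff by simp
  have C: "\<not> ((a = 0 \<or> (a = 0 \<and> b = 0)) \<and> (b = 0 \<or> (c = 0 \<and> d = 0))
               \<and> (c = 0 \<or> (a = 0 \<and> b = 0)) \<and> (d = 0 \<or> (c = 0 \<and> d = 0)))"
  proof
    assume h: "(a = 0 \<or> (a = 0 \<and> b = 0)) \<and> (b = 0 \<or> (c = 0 \<and> d = 0))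
               \<and> (c = 0 \<or> (a = 0 \<and> b = 0)) \<and> (d = 0 \<or> (c = 0 \<and> d = 0))"
    then have "sc (r*a) (mult e e) = 0" "sc (s*b) (mult f f) = 0"
      "sc (r*c) (mult e e) = 0" "sc (s*d) (mult f f) = 0"
      unfolding E0[symmetric] F0[symmetric] by auto
    then have "mult z (mult e e) = 0" "mult z (mult f f) = 0"
      by (simp_all only: Z1 Z2 add_0_right)
    then show False using z by simp
  qed
  have "a \<noteq> 0 \<and> b \<noteq> 0 \<and> c \<noteq> 0 \<and> d \<noteq> 0"
    by (rule fieldpart) (use A B C in \<open>simp_all add: power3_eq_cube power2_eq_square\<close>)
  then show ?thesis using A by (simp add: power3_eq_cube power2_eq_square)
qed

lemma scl: "sc x (sc p e + sc q f) = sc (x*p) e + sc (x*q) f"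
  by (simp add: scale_right_distrib)

lemma pseudo:
  assumes cube: "alg_cube sc mult \<noteq> {0}" and sqsq: "alg_sq_sq sc mult = {0}"
  shows "pseudo_square sc mult e f = {L, T, R, D}"
proof -
  obtain a b where ee: "mult e e = sc a e + sc b f" using coords by blast
  obtain c d where ff: "mult f f = sc c e + sc d f" using coords by blast
  have nz: "a \<noteq> 0" "b \<noteq> 0" "c \<noteq> 0" "d \<noteq> 0" using main[OF cube sqsq ee ff] by auto
  show ?thesis
  proof (intro set_eqI)
    fix x show "x \<in> pseudo_square sc mult e f \<longleftrightarrow> x \<in> {L, T, R, D}"
      unfolding pseudo_square_def by (cases x) (simp_all add: ee ff rep nz)
  qed
qed

lemma not_alt:
  assumes cube: "alg_cube sc mult \<noteq> {0}" and sqsq: "alg_sq_sq sc mult = {0}"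
  shows "\<not> alternative_alg mult"
proof
  assume h: "alternative_alg mult"
  obtain a b where ee: "mult e e = sc a e + sc b f" using coords by blast
  obtain c d where ff: "mult f f = sc c e + sc d f" using coords by blast
  have nz: "a \<noteq> 0" "b \<noteq> 0" "c \<noteq> 0" "d \<noteq> 0" using main[OF cube sqsq ee ff] by auto
  have "mult (mult e e) f = sc b (mult f f)" unfolding ee by (simp add: madd1 msc1 ef)
  moreover have "mult f f \<noteq> 0" using ff zero_iff nz by simp
  moreover have "mult (mult e e) f = mult e (mult e f)" using h unfolding alternative_alg_def by blast
  ultimately show False using nz by (simp add: ef m0)
qed

lemma nb_scale:
  assumes p: "p \<noteq> 0" and q: "q \<noteq> 0"
  shows "natural_basis2 sc mult (sc p e) (sc q f)"
  unfolding natural_basis2_def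
proof (intro conjI)
  show "sc p e \<noteq> sc q f"
  proof
    assume "sc p e = sc q f"
    then have "sc p e + sc (-q) f = 0" by (simp add: scale_minus_left)
    then show False using zero_iff p by blast
  qed
  then have neq: "sc p e \<noteq> sc q f" .
  show "\<not> dependent {sc p e, sc q f}"
  proof
    assume "dependent {sc p e, sc q f}"
    then obtain u where u: "\<exists>v\<in>{sc p e, sc q f}. u v \<noteq> 0"
        "(\<Sum>v\<in>{sc p e, sc q f}. sc (u v) v) = 0"
      using dependent_finite[of "{sc p e, sc q f}"] by auto
    have "sc (u (sc p e) * p) e + sc (u (sc q f) * q) f = 0" using u(2) neq by simp
    then show False using zero_iff u(1) p q by auto
  qed
  have "{e, f} \<subseteq> span {sc p e, sc q f}"
  proof -
    have "e = sc (1/p) (sc p e)" using p by simp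
    moreover have "f = sc (1/q) (sc q f)" using q by simp
    ultimately show ?thesis by (metis empty_subsetI insert_subset span_base span_scale insertI1 insertI2 singletonI)
  qed
  then have "span {e, f} \<subseteq> span {sc p e, sc q f}" by (rule span_minimal) (rule subspace_span)
  then show "span {sc p e, sc q f} = UNIV" using spanU by auto
  show "mult (sc p e) (sc q f) = 0" by (simp add: msc1 msc2 ef)
  show "mult (sc q f) (sc p e) = 0" by (simp add: msc1 msc2 fe)
qed

lemma normal_form:
  assumes cube: "alg_cube sc mult \<noteq> {0}" and sqsq: "alg_sq_sq sc mult = {0}"
  shows "\<exists>e' f'. natural_basis2 sc mult e' f' \<and> mult e' e' = e' - f' \<and> mult f' f' = - e' + f'"
proof -
  obtain a b where ee: "mult e e = sc a e + sc b f" using coords by blast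
  obtain c d where ff: "mult f f = sc c e + sc d f" using coords by blast
  have M: "a \<noteq> 0" "b \<noteq> 0" "c \<noteq> 0" "d \<noteq> 0" "a^3 + b^2*c = 0" "a^2*b + b^2*d = 0"
    using main[OF cube sqsq ee ff] by auto
  define p where "p = 1/a"
  define q where "q = - b / a^2"
  have p0: "p \<noteq> 0" and q0: "q \<noteq> 0" using M by (auto simp: p_def q_def)
  have 1: "mult (sc p e) (sc p e) = sc p e - sc q f"
  proof -
    have "mult (sc p e) (sc p e) = sc (p*p) (mult e e)" by (simp add: msc1 msc2)
    also have "\<dots> = sc (p*p*a) e + sc (p*p*b) f" unfolding ee scl ..
    also have "\<dots> = sc p e + sc (-q) f"
      unfolding eq_iff using M by (simp add: p_def q_def power2_eq_square)
    also have "\<dots> = sc p e - sc q f" by (simp add: scale_minus_left)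
    finally show ?thesis .
  qed
  have 2: "mult (sc q f) (sc q f) = - sc p e + sc q f"
  proof -
    have "mult (sc q f) (sc q f) = sc (q*q) (mult f f)" by (simp add: msc1 msc2)
    also have "\<dots> = sc (q*q*c) e + sc (q*q*d) f" unfolding ff scl ..
    also have "\<dots> = sc (-p) e + sc q f"
    proof -
      have c: "b^2*c = - (a^3)" using M by (simp add: eq_neg_iff_add_eq_0 add.commute)
      have "b * (a^2 + b*d) = 0" using M(6) by (simp add: algebra_simps power2_eq_square)
      then have "a^2 + b*d = 0" using M(2) by simp
      then have d: "b*d = - (a^2)" by (simp add: eq_neg_iff_add_eq_0 add.commute)
      have "q*q*c = -p"
        using c M unfolding p_def q_def by (simp add: field_simps power2_eq_square power3_eq_cube)
      moreover have "q*q*d = q"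
        using d M unfolding p_def q_def by (simp add: field_simps power2_eq_square)
      ultimately show ?thesis by simp
    qed
    also have "\<dots> = - sc p e + sc q f" by (simp add: scale_minus_left)
    finally show ?thesis .
  qed
  show ?thesis using nb_scale[OF p0 q0] 1 2 by blast
qed

end

theorem proposition3p10:
  fixes sc :: "'k::field \<Rightarrow> 'a::ab_group_add \<Rightarrow> 'a"
    and mult :: "'a \<Rightarrow> 'a \<Rightarrow> 'a"
  assumes "evolution_algebra2 sc mult"
    and "vector_space.dim sc (alg_sq sc mult) = 1"
    and "alg_cube sc mult \<noteq> {0}"
    and "alg_sq_sq sc mult = {0}"
  shows "(\<exists>e f. natural_basis2 sc mult e f \<and> mult e e = e - f \<and> mult f f = - e + f)
         \<and> square_of sc mult = frakD5
         \<and> \<not> alternative_alg mult"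
proof -
  have vs: "vector_space sc" and bil: "bilinear_mult sc mult"
    using assms(1) unfolding evolution_algebra2_def by auto
  obtain e f where nb: "natural_basis2 sc mult e f"
    using assms(1) unfolding evolution_algebra2_def by auto
  have N: "nb2 sc mult x y" if "natural_basis2 sc mult x y" for x y
    unfolding nb2_def nb2_axioms_def using vs bil that by blast
  have 1: "\<exists>e f. natural_basis2 sc mult e f \<and> mult e e = e - f \<and> mult f f = - e + f"
    using nb2.normal_form[OF N[OF nb] assms(3,4)] .
  have 2: "square_of sc mult = frakD5"
  proof -
    have "square_of sc mult = {{L, T, R, D}}"
    proof
      show "square_of sc mult \<subseteq> {{L, T, R, D}}"
        unfolding square_of_def using nb2.pseudo[OF N assms(3,4)] by blast
      show "{{L, T, R, D}} \<subseteq> square_of sc mult"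
        unfolding square_of_def using nb2.pseudo[OF N[OF nb] assms(3,4)] nb by blast
    qed
    then show ?thesis unfolding frakD5_def .
  qed
  have 3: "\<not> alternative_alg mult"
    using nb2.not_alt[OF N[OF nb] assms(3,4)] .
  show ?thesis using 1 2 3 by blast
qed

end
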